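(* Let $d=p$ be a prime with $p\equiv 3 \bmod 4$, and let $X$ be the cyclic shift operator $X|r\rangle=|r+1\rangle$ (indices modulo $d$). Let $|\mathbf v\rangle=(\sqrt{x_0},v_1,\dots,v_{d-1})^{\rm T}$ be a vector with $x_0=-2-\sqrt{d+1}$ (so $\sqrt{x_0}$ is purely imaginary), $|v_j|^2=1$, $v_{-j}=-v_j^*$, and of Legendre form: for $j\neq 0$, $v_j=x_1$ if $j$ is a quadratic residue modulo $p$ and $v_j=-1/x_1$ otherwise (so $x_1$ is a phase factor, $x_1^*=1/x_1$). Write $\left(\frac{j}{d}\right)$ for the Legendre symbol. If $\left(\frac{j}{d}\right)=1$ and $d\equiv 3\bmod 8$, then $$\langle \mathbf v|X^{-2j}|\mathbf v\rangle=\sum_{k=0}^{d-1}v_k^*v_{k+2j}=\frac{d-3}{2}-\frac{d-3}{4}\frac{1}{x_1^2}-\frac{d+1}{4}x_1^2+\frac{2\sqrt{x_0}}{x_1}.$$ If $\left(\frac{j}{d}\right)=1$ and $d\equiv 7\bmod 8$, then $$\langle \mathbf v|X^{-2j}|\mathbf v\rangle=\frac{d-3}{2}-\frac{d+1}{4}\frac{1}{x_1^2}-\frac{d-3}{4}x_1^2-2\sqrt{x_0}\,x_1.$$ If $\left(\frac{j}{d}\right)=-1$, the corresponding formulas are obtained by substituting $x_1\mapsto -1/x_1$ in these equations.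
   Context: Here $d=p\equiv 3\bmod 4$ prime, $X$ is the Weyl–Heisenberg shift $X|r\rangle=|r+1\rangle$ on $\mathbb C^d$ with basis indexed by integers mod $d$, and $|\mathbf v\rangle$ is an (unnormalized) almost flat "Legendre vector": first component $\sqrt{x_0}$ with $x_0=-2-\sqrt{d+1}$, remaining components of modulus one satisfying $v_{-j}=-v_j^*$, equal to a phase $x_1$ on quadratic residues and $-1/x_1$ on non-residues (consistent since $-1$ is a non-residue when $p\equiv 3\bmod 4$). *)

theory Defs
  imports Complex_Main "HOL-Number_Theory.Number_Theory"
begin

text \<open>Right-hand side of the overlap formula for d = 3 mod 8, as a function of
  the dimension d, the value s = sqrt(x0), and the phase y (= x1).\<close>
definition rhs3 :: "nat \<Rightarrow> complex \<Rightarrow> complex \<Rightarrow> complex" where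
  "rhs3 d s y = (of_nat d - 3) / 2 - (of_nat d - 3) / 4 * (1 / y^2)
                 - (of_nat d + 1) / 4 * y^2 + 2 * s / y"

definition rhs7 :: "nat \<Rightarrow> complex \<Rightarrow> complex \<Rightarrow> complex" where
  "rhs7 d s y = (of_nat d - 3) / 2 - (of_nat d + 1) / 4 * (1 / y^2)
                 - (of_nat d - 3) / 4 * y^2 - 2 * s * y"

end

theory Submission
  imports Defs
begin

lemma leg_mod: "Legendre (a mod int p) (int p) = Legendre a (int p)"
  by (simp add: Legendre_def QuadRes_def cong_def)

lemma leg_vals: "Legendre a P = -1 \<or> Legendre a P = 0 \<or> Legendre a P = 1"
  by (simp add: Legendre_def)

lemma leg_zero: "Legendre a P = 0 \<longleftrightarrow> P dvd a"
  by (simp add: Legendre_def cong_0_iff)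

lemma leg_mult:
  assumes "prime p" "2 < p"
  shows "Legendre (a*b) (int p) = Legendre a (int p) * Legendre b (int p)"
proof -
  have e1: "[Legendre (a*b) (int p) = (a*b) ^ ((p - 1) div 2)] (mod int p)"
    using euler_criterion assms by blast
  have e2: "[Legendre a (int p) * Legendre b (int p) = a ^ ((p - 1) div 2) * b ^ ((p - 1) div 2)] (mod int p)"
    using euler_criterion assms cong_mult by blast
  have "[Legendre (a*b) (int p) = Legendre a (int p) * Legendre b (int p)] (mod int p)"
    using e1 e2 by (metis cong_sym cong_trans power_mult_distrib)
  hence c: "[Legendre (a*b) (int p) + 1 = Legendre a (int p) * Legendre b (int p) + 1] (mod int p)"
    by (simp add: cong_add)
  have v1: "0 \<le> Legendre (a*b) (int p) + 1" "Legendre (a*b) (int p) + 1 < int p"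
    using leg_vals[of "a*b" "int p"] assms by auto
  have v2: "0 \<le> Legendre a (int p) * Legendre b (int p) + 1" "Legendre a (int p) * Legendre b (int p) + 1 < int p"
    using leg_vals[of a "int p"] leg_vals[of b "int p"] assms by auto
  show ?thesis using cong_less_imp_eq_int[OF v1 v2 c] by simp
qed

lemma leg_minus1:
  assumes "prime p" "p mod 4 = 3"
  shows "Legendre (-1) (int p) = -1"
proof -
  have p2: "2 < p" using assms prime_gt_1_nat[of p] by presburger
  have e: "[Legendre (-1) (int p) = (-1) ^ ((p - 1) div 2)] (mod int p)"
    using euler_criterion assms p2 by blast
  have "odd ((p - 1) div 2)" using assms by presburger
  hence "[Legendre (-1) (int p) = -1] (mod int p)" using e by simp
  hence c: "[Legendre (-1) (int p) + 1 = 0] (mod int p)" using cong_add[of _ "-1" "int p" 1 1] by simp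
  have v1: "0 \<le> Legendre (-1) (int p) + 1" "Legendre (-1) (int p) + 1 < int p"
    using leg_vals[of "-1" "int p"] p2 by auto
  show ?thesis using cong_less_imp_eq_int[OF v1 _ _ c] p2 by simp
qed

lemma leg_two:
  assumes "prime p" "p mod 4 = 3"
  shows "Legendre 2 (int p) = (if p mod 8 = 3 then -1 else 1)"
proof -
  have p2: "2 < p" using assms prime_gt_1_nat[of p] by presburger
  have nz: "[2 \<noteq> 0] (mod int p)"
  proof
    assume "[2 = 0] (mod int p)"
    hence "int p dvd 2" by (simp add: cong_0_iff)
    hence "int p \<le> 2" by (rule zdvd_imp_le) simp
    thus False using p2 by simp
  qed
  interpret G: GAUSS p 2 using assms p2 nz by unfold_locales auto
  define h where "h = (int p - 1) div 2"
  have C: "G.C = (\<lambda>x. 2 * x) ` {0<..h}"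
    unfolding G.C_def G.B_def G.A_def h_def image_image
    by (intro image_cong refl) auto
  have E: "G.E = (\<lambda>x. 2 * x) ` {h div 2<..h}"
    unfolding G.E_def C h_def by auto
  have "card G.E = card {h div 2<..h}"
    unfolding E by (intro card_image inj_onI) auto
  also have "\<dots> = nat (h - h div 2)" by simp
  finally have cE: "card G.E = nat (h - h div 2)" .
  show ?thesis
  proof (cases "p mod 8 = 3")
    case True
    then obtain k where "p = 8*k+3" by (metis div_mod_decomp mult.commute)
    hence "h = 4*k+1" unfolding h_def by simp
    hence "card G.E = 2*k+1" using cE by simp
    thus ?thesis using G.gauss_lemma True by simp
  next
    case False
    hence "p mod 8 = 7" using assms by presburger
    then obtain k where "p = 8*k+7" by (metis div_mod_decomp mult.commute)
    hence "h = 4*k+3" unfolding h_def by simp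
    hence "card G.E = 2*k+2" using cE by simp
    thus ?thesis using G.gauss_lemma False by simp
  qed
qed

lemma bij_mod_map:
  fixes P :: int
  assumes "\<And>k. g k = G k mod P" "0 < P"
    and inj: "\<And>k1 k2. 0 \<le> k1 \<Longrightarrow> k1 < P \<Longrightarrow> 0 \<le> k2 \<Longrightarrow> k2 < P \<Longrightarrow> g k1 = g k2 \<Longrightarrow> k1 = k2"
  shows "bij_betw g {0..<P} {0..<P}"
proof -
  have sub: "g ` {0..<P} \<subseteq> {0..<P}" using assms(1,2) by auto
  have "inj_on g {0..<P}" using inj by (auto intro: inj_onI)
  moreover have "g ` {0..<P} = {0..<P}"
    using endo_inj_surj[OF _ sub] calculation by simp
  ultimately show ?thesis by (simp add: bij_betw_def)
qed

lemma eq_of_mod_eq: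
  fixes P :: int
  assumes "0 \<le> k1" "k1 < P" "0 \<le> k2" "k2 < P" "k1 mod P = k2 mod P"
  shows "k1 = k2"
  using assms by simp

lemma sum_shift:
  fixes P :: int and f :: "int \<Rightarrow> 'a::comm_monoid_add"
  assumes per: "\<And>a. f (a mod P) = f a" and P: "0 < P"
  shows "(\<Sum>k\<in>{0..<P}. f (k + m)) = (\<Sum>k\<in>{0..<P}. f k)"
proof -
  have b: "bij_betw (\<lambda>k. (k + m) mod P) {0..<P} {0..<P}"
  proof (rule bij_mod_map[OF _ P])
    fix k1 k2 :: int assume h: "0 \<le> k1" "k1 < P" "0 \<le> k2" "k2 < P" "(k1 + m) mod P = (k2 + m) mod P"
    hence "k1 mod P = k2 mod P" by (metis add_diff_cancel_right' mod_diff_left_eq)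
    thus "k1 = k2" using h by simp
  qed simp
  have "(\<Sum>k\<in>{0..<P}. f (k + m)) = (\<Sum>k\<in>{0..<P}. f ((k + m) mod P))" using per by simp
  also have "\<dots> = (\<Sum>k\<in>{0..<P}. f k)" by (rule sum.reindex_bij_betw[OF b])
  finally show ?thesis .
qed

lemma sum_mult:
  fixes f :: "int \<Rightarrow> 'a::comm_monoid_add"
  assumes per: "\<And>a. f (a mod int p) = f a" and p: "prime p" and c: "\<not> int p dvd c"
  shows "(\<Sum>k\<in>{0..<int p}. f (c * k)) = (\<Sum>k\<in>{0..<int p}. f k)"
proof -
  have P: "0 < int p" using p prime_gt_0_nat by simp
  have pi: "prime (int p)" using p by simp
  have b: "bij_betw (\<lambda>k. (c * k) mod int p) {0..<int p} {0..<int p}"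
  proof (rule bij_mod_map[OF _ P])
    fix k1 k2 :: int assume h: "0 \<le> k1" "k1 < int p" "0 \<le> k2" "k2 < int p" "(c * k1) mod int p = (c * k2) mod int p"
    hence "int p dvd c * (k1 - k2)" by (metis mod_eq_dvd_iff right_diff_distrib)
    hence "int p dvd (k1 - k2)" using c pi prime_dvd_mult_iff by blast
    hence "k1 mod int p = k2 mod int p" by (simp add: mod_eq_dvd_iff)
    thus "k1 = k2" using h by simp
  qed simp
  have "(\<Sum>k\<in>{0..<int p}. f (c * k)) = (\<Sum>k\<in>{0..<int p}. f ((c * k) mod int p))" using per by simp
  also have "\<dots> = (\<Sum>k\<in>{0..<int p}. f k)" by (rule sum.reindex_bij_betw[OF b])
  finally show ?thesis .
qed

lemma leg_sum0:
  assumes "prime p" "p mod 4 = 3"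
  shows "(\<Sum>k\<in>{0..<int p}. Legendre k (int p)) = 0"
proof -
  have p2: "2 < p" using assms prime_gt_1_nat[of p] by presburger
  have nd: "\<not> int p dvd (-1)" using p2 by simp
  have "(\<Sum>k\<in>{0..<int p}. Legendre k (int p)) = (\<Sum>k\<in>{0..<int p}. Legendre ((-1) * k) (int p))"
    using sum_mult[of "\<lambda>k. Legendre k (int p)", OF leg_mod assms(1) nd] by simp
  also have "\<dots> = - (\<Sum>k\<in>{0..<int p}. Legendre k (int p))"
    using leg_mult[OF assms(1) p2, of "-1"] leg_minus1[OF assms] by (simp add: sum_negf)
  finally show ?thesis by simp
qed

lemma leg_sq:
  assumes "prime p" "2 < p" "\<not> int p dvd a"
  shows "Legendre a (int p) * Legendre a (int p) = 1"
  using leg_vals[of a "int p"] leg_zero[of a "int p"] assms by auto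

lemma leg_corr:
  assumes "prime p" "p mod 4 = 3" "\<not> int p dvd m"
  shows "(\<Sum>k\<in>{0..<int p}. Legendre k (int p) * Legendre (k + m) (int p)) = -1"
proof -
  have p2: "2 < p" using assms(1,2) prime_gt_1_nat[of p] by presburger
  define L where "L a = Legendre a (int p)" for a
  define g where "g a = (\<Sum>k\<in>{0..<int p}. L k * L (k + a))" for a
  have Lper: "L (a mod int p) = L a" for a unfolding L_def by (rule leg_mod)
  have Lm: "L (a * b) = L a * L b" for a b unfolding L_def by (rule leg_mult[OF assms(1) p2])
  have ga: "g a = g 1" if "\<not> int p dvd a" for a
  proof -
    have per: "L (b mod int p) * L (b mod int p + a) = L b * L (b + a)" for b
      by (metis Lper mod_add_left_eq)
    have "g a = (\<Sum>k\<in>{0..<int p}. L (a * k) * L (a * k + a))"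
      unfolding g_def using sum_mult[of "\<lambda>k. L k * L (k + a)", OF per assms(1) that] by simp
    also have "\<dots> = (\<Sum>k\<in>{0..<int p}. (L a * L a) * (L k * L (k + 1)))"
    proof (rule sum.cong[OF refl])
      fix k show "L (a * k) * L (a * k + a) = (L a * L a) * (L k * L (k + 1))"
        using Lm[of a k] Lm[of a "k+1"] by (simp add: algebra_simps)
    qed
    also have "\<dots> = g 1" using leg_sq[OF assms(1) p2 that] unfolding g_def L_def by simp
    finally show ?thesis .
  qed
  have g0: "g 0 = int p - 1"
  proof -
    have "g 0 = (\<Sum>k\<in>{0..<int p}. if k = 0 then 0 else 1)"
      unfolding g_def
    proof (rule sum.cong[OF refl])
      fix k assume k: "k \<in> {0..<int p}"
      show "L k * L (k + 0) = (if k = 0 then 0 else 1)"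
      proof (cases "k = 0")
        case True thus ?thesis by (simp add: L_def Legendre_def)
      next
        case False
        hence "\<not> int p dvd k" using k zdvd_imp_le by fastforce
        thus ?thesis using leg_sq[OF assms(1) p2] False by (simp add: L_def)
      qed
    qed
    also have "\<dots> = (\<Sum>k\<in>{0..<int p} - {0}. 1)"
      using p2 by (subst sum.remove[of _ 0]) (auto intro: sum.cong)
    also have "\<dots> = int p - 1" using p2 by simp
    finally show ?thesis .
  qed
  have tot: "(\<Sum>a\<in>{0..<int p}. g a) = 0"
  proof -
    have "(\<Sum>a\<in>{0..<int p}. g a) = (\<Sum>k\<in>{0..<int p}. L k * (\<Sum>a\<in>{0..<int p}. L (a + k)))"
      unfolding g_def by (subst sum.swap) (simp add: sum_distrib_left add.commute)
    also have "\<dots> = (\<Sum>k\<in>{0..<int p}. L k * 0)"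
    proof (rule sum.cong[OF refl])
      fix k
      have "(\<Sum>a\<in>{0..<int p}. L (a + k)) = (\<Sum>a\<in>{0..<int p}. L a)"
        by (rule sum_shift[of L, OF Lper]) (use p2 in simp)
      also have "\<dots> = 0" unfolding L_def by (rule leg_sum0[OF assms(1,2)])
      finally show "L k * (\<Sum>a\<in>{0..<int p}. L (a + k)) = L k * 0" by simp
    qed
    finally show ?thesis by simp
  qed
  have "(\<Sum>a\<in>{0..<int p}. g a) = g 0 + (\<Sum>a\<in>{0..<int p} - {0}. g a)"
    using p2 by (subst sum.remove[of _ 0]) auto
  also have "(\<Sum>a\<in>{0..<int p} - {0}. g a) = (\<Sum>a\<in>{0..<int p} - {0}. g 1)"
  proof (rule sum.cong[OF refl])
    fix a assume a: "a \<in> {0..<int p} - {0}"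
    hence "\<not> int p dvd a" using zdvd_imp_le by fastforce
    thus "g a = g 1" by (rule ga)
  qed
  also have "\<dots> = (int p - 1) * g 1" using p2 by simp
  finally have "0 = (int p - 1) + (int p - 1) * g 1" using tot g0 by simp
  hence "(int p - 1) * (g 1 + 1) = 0" by (simp only: distrib_left mult_1_right)
  moreover have "int p - 1 \<noteq> 0" using p2 by simp
  ultimately have "g 1 + 1 = 0" by simp
  hence g1: "g 1 = -1" by simp
  show ?thesis using ga[OF assms(3)] g1 unfolding g_def L_def by simp
qed

lemma core:
  fixes w :: "int \<Rightarrow> complex" and \<alpha> \<beta> s :: complex
  assumes p: "prime p" "p mod 4 = 3" and t: "\<not> int p dvd t"
    and w0: "\<And>a. int p dvd a \<Longrightarrow> w a = s"
    and cs: "cnj s = - s"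
    and wn: "\<And>a. \<not> int p dvd a \<Longrightarrow> w a = \<alpha> + \<beta> * of_int (Legendre a (int p))"
    and cwn: "\<And>a. \<not> int p dvd a \<Longrightarrow> cnj (w a) = - \<alpha> + \<beta> * of_int (Legendre a (int p))"
  shows "(\<Sum>k\<in>{0..<int p}. cnj (w k) * w (k + t)) =
     - (of_int (int p) - 2) * \<alpha>^2 - \<beta>^2 + 2 * \<alpha> * \<beta> * of_int (Legendre t (int p))
     - 2 * s * (\<alpha> + \<beta> * of_int (Legendre t (int p)))"
proof -
  have p2: "2 < p" using p prime_gt_1_nat[of p] by presburger
  define P where "P = int p"
  define A where "A = {0..<P}"
  define L where "L a = (of_int (Legendre a P) :: complex)" for a
  define c where "c = L t"
  define F where "F k = cnj (w k) * w (k + t)" for k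
  define f where "f k = (- \<alpha> + \<beta> * L k) * (\<alpha> + \<beta> * L (k + t))" for k
  define k0 where "k0 = (- t) mod P"
  have P0: "0 < P" using p2 P_def by simp
  have fin: "finite A" unfolding A_def by simp
  have kzA: "k0 \<in> A" unfolding A_def k0_def using P0 by simp
  have k0nz: "k0 \<noteq> 0" using t unfolding k0_def P_def by (simp add: mod_eq_0_iff_dvd)
  have k0t: "P dvd k0 + t" unfolding k0_def dvd_eq_mod_eq_0 by (simp add: mod_add_left_eq)
  have zA: "0 \<in> A" unfolding A_def using P0 by simp
  have ndA: "\<not> P dvd k" if "k \<in> A" "k \<noteq> 0" for k
    using that zdvd_imp_le[of P k] unfolding A_def by auto
  have L0: "L a = 0" if "P dvd a" for a using that by (simp add: L_def leg_zero)
  have Lneg: "L (- a) = - L a" for a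
    using leg_mult[OF p(1) p2, of "-1" a] leg_minus1[OF p] by (simp add: L_def P_def)
  have Lk0: "L k0 = - c"
  proof -
    have "L k0 = L (- t)" unfolding k0_def L_def P_def by (simp add: leg_mod)
    thus ?thesis using Lneg c_def by simp
  qed
  have Fr: "F k = f k" if "k \<in> A - {0} - {k0}" for k
  proof -
    have a: "\<not> P dvd k" using that ndA by auto
    have b: "\<not> P dvd k + t"
    proof
      assume "P dvd k + t"
      hence "k mod P = (- t) mod P" using mod_eq_dvd_iff[of k P "-t"] by simp
      hence "k = k0" using that unfolding A_def k0_def by simp
      thus False using that by simp
    qed
    show ?thesis unfolding F_def f_def using a b wn cwn P_def L_def by simp
  qed
  have sumA: "sum F A = F 0 + F k0 + (sum f A - f 0 - f k0)"
  proof -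
    have e1: "sum g A = g 0 + g k0 + sum g (A - {0} - {k0})" for g :: "int \<Rightarrow> complex"
    proof -
      have "sum g A = g 0 + sum g (A - {0})" using fin zA by (rule sum.remove)
      moreover have "sum g (A - {0}) = g k0 + sum g (A - {0} - {k0})"
        using fin kzA k0nz by (intro sum.remove) auto
      ultimately show ?thesis by simp
    qed
    have "sum F (A - {0} - {k0}) = sum f (A - {0} - {k0})" using Fr by (rule sum.cong[OF refl])
    thus ?thesis using e1[of F] e1[of f] by simp
  qed
  have s1: "sum L A = 0"
    using leg_sum0[OF p] unfolding L_def A_def P_def by (simp flip: of_int_sum)
  have s2: "(\<Sum>k\<in>A. L (k + t)) = 0"
  proof -
    have "(\<Sum>k\<in>A. L (k + t)) = sum L A"
      unfolding A_def by (rule sum_shift) (use P0 in \<open>simp_all add: L_def P_def leg_mod\<close>)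
    thus ?thesis using s1 by simp
  qed
  have s3: "(\<Sum>k\<in>A. L k * L (k + t)) = -1"
  proof -
    have "(\<Sum>k\<in>A. L k * L (k + t)) = of_int (\<Sum>k\<in>A. Legendre k P * Legendre (k + t) P)"
      unfolding L_def by (simp add: of_int_sum)
    thus ?thesis using leg_corr[OF p t] unfolding A_def P_def by simp
  qed
  have cardA: "card A = p" unfolding A_def P_def by simp
  have "sum f A = (\<Sum>k\<in>A. (- (\<alpha> * \<alpha>)) + \<alpha> * \<beta> * L k - \<alpha> * \<beta> * L (k + t) + (\<beta> * \<beta>) * (L k * L (k + t)))"
    unfolding f_def by (rule sum.cong[OF refl]) (simp add: algebra_simps power2_eq_square)
  also have "\<dots> = - of_nat p * \<alpha>^2 + \<alpha> * \<beta> * sum L A - \<alpha> * \<beta> * (\<Sum>k\<in>A. L (k + t)) + (\<beta> * \<beta>) * (\<Sum>k\<in>A. L k * L (k + t))"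
    by (simp add: sum.distrib sum_subtractf sum_distrib_left cardA power2_eq_square)
  finally have sf: "sum f A = - of_nat p * \<alpha>^2 - \<beta>^2" using s1 s2 s3 by (simp add: power2_eq_square)
  have f0: "f 0 = - \<alpha> * (\<alpha> + \<beta> * c)" unfolding f_def c_def using L0[of 0] by simp
  have fk0: "f k0 = (- \<alpha> - \<beta> * c) * \<alpha>" unfolding f_def using L0[OF k0t] Lk0 by simp
  have F0: "F 0 = - s * (\<alpha> + \<beta> * c)"
    unfolding F_def c_def L_def using w0[of 0] cs wn[OF t] P_def by simp
  have Fk0: "F k0 = (- \<alpha> - \<beta> * c) * s"
  proof -
    have "cnj (w k0) = - \<alpha> + \<beta> * L k0" using cwn ndA[OF kzA k0nz] L_def P_def by simp
    moreover have "w (k0 + t) = s" using w0 k0t P_def by simp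
    ultimately show ?thesis unfolding F_def using Lk0 by simp
  qed
  have "sum F A = - (of_int (int p) - 2) * \<alpha>^2 - \<beta>^2 + 2 * \<alpha> * \<beta> * c - 2 * s * (\<alpha> + \<beta> * c)"
    unfolding sumA sf f0 fk0 F0 Fk0 by (simp add: algebra_simps power2_eq_square)
  thus ?thesis unfolding F_def A_def c_def L_def P_def .
qed

lemma alg:
  fixes x s N :: complex
  assumes x: "x \<noteq> 0"
  defines "a \<equiv> (x - 1/x)/2" and "b \<equiv> (x + 1/x)/2"
  shows "- (N - 2) * a^2 - b^2 + 2 * a * b * (-1) - 2 * s * (a + b * (-1)) =
           (N - 3) / 2 - (N - 3) / 4 * (1 / x^2) - (N + 1) / 4 * x^2 + 2 * s / x"
    and "- (N - 2) * a^2 - b^2 + 2 * a * b * 1 - 2 * s * (a + b * 1) =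
           (N - 3) / 2 - (N + 1) / 4 * (1 / x^2) - (N - 3) / 4 * x^2 - 2 * s * x"
    and "- (N - 2) * a^2 - b^2 + 2 * a * b * 1 - 2 * s * (a + b * 1) =
           (N - 3) / 2 - (N - 3) / 4 * (1 / (-1/x)^2) - (N + 1) / 4 * (-1/x)^2 + 2 * s / (-1/x)"
    and "- (N - 2) * a^2 - b^2 + 2 * a * b * (-1) - 2 * s * (a + b * (-1)) =
           (N - 3) / 2 - (N + 1) / 4 * (1 / (-1/x)^2) - (N - 3) / 4 * (-1/x)^2 - 2 * s * (-1/x)"
  using x unfolding a_def b_def by (simp_all add: field_simps power2_eq_square)

theorem lemma1:
  fixes p :: nat and j :: int and x1 :: complex and v :: "nat \<Rightarrow> complex"
  assumes "prime p" and "p mod 4 = 3"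
    and "cmod x1 = 1"
    and v0: "v 0 = csqrt (complex_of_real (-2 - sqrt (real p + 1)))"
    and vabs: "\<And>k. 0 < k \<Longrightarrow> k < p \<Longrightarrow> cmod (v k) = 1"
    and vsym: "\<And>k. k < p \<Longrightarrow> v ((p - k) mod p) = - cnj (v k)"
    and vleg: "\<And>k. 0 < k \<Longrightarrow> k < p \<Longrightarrow>
               v k = (if Legendre (int k) (int p) = 1 then x1 else - 1 / x1)"
  shows "let S = (\<Sum>k<p. cnj (v k) * v (nat ((int k + 2 * j) mod int p)));
             s = csqrt (complex_of_real (-2 - sqrt (real p + 1)))
         in (Legendre j (int p) = 1 \<and> p mod 8 = 3 \<longrightarrow> S = rhs3 p s x1)
          \<and> (Legendre j (int p) = 1 \<and> p mod 8 = 7 \<longrightarrow> S = rhs7 p s x1)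
          \<and> (Legendre j (int p) = -1 \<and> p mod 8 = 3 \<longrightarrow> S = rhs3 p s (- 1 / x1))
          \<and> (Legendre j (int p) = -1 \<and> p mod 8 = 7 \<longrightarrow> S = rhs7 p s (- 1 / x1))"
proof -
  note p = assms(1,2)
  have p2: "2 < p" using p prime_gt_1_nat[of p] by presburger
  define P where "P = int p"
  define s where "s = v 0"
  define w where "w a = v (nat (a mod P))" for a
  define \<alpha> where "\<alpha> = (x1 - 1/x1)/2"
  define \<beta> where "\<beta> = (x1 + 1/x1)/2"
  have x0: "x1 \<noteq> 0" using assms(3) by auto
  have cx: "cnj x1 = 1 / x1"
    using complex_div_cnj[of 1 x1] assms(3) by simp
  have cs: "cnj s = - s"
  proof -
    have h: "v 0 = - cnj (v 0)" using vsym[of 0] p2 by simp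
    have "cnj (v 0) = - v 0" using arg_cong[OF h, of uminus] by simp
    thus ?thesis unfolding s_def .
  qed
  have w0: "w a = s" if "int p dvd a" for a
    using that unfolding w_def s_def P_def by simp
  have wv: "w a = (if Legendre a (int p) = 1 then x1 else - 1 / x1) \<and> Legendre a (int p) \<noteq> 0"
    if "\<not> int p dvd a" for a
  proof -
    define k where "k = nat (a mod P)"
    have P0: "0 < P" unfolding P_def using p2 by simp
    have kk: "int k = a mod P" unfolding k_def using P0 by simp
    have "a mod P \<noteq> 0" using that unfolding P_def by (simp add: mod_eq_0_iff_dvd)
    moreover have "a mod P < P" "0 \<le> a mod P" using P0 by simp_all
    ultimately have k: "0 < k" "k < p" using kk unfolding P_def by linarith+
    have "Legendre (int k) (int p) = Legendre a (int p)" unfolding kk P_def by (rule leg_mod)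
    hence "v k = (if Legendre a (int p) = 1 then x1 else - 1 / x1)" using vleg[OF k] by simp
    moreover have "w a = v k" unfolding w_def k_def ..
    moreover have "Legendre a (int p) \<noteq> 0" using that leg_zero by blast
    ultimately show ?thesis by simp
  qed
  have ab1: "\<alpha> + \<beta> = x1" "\<alpha> - \<beta> = - 1 / x1" "- \<alpha> + \<beta> = 1 / x1" "- \<alpha> - \<beta> = - x1"
    unfolding \<alpha>_def \<beta>_def by (simp_all add: field_simps)
  have wn: "w a = \<alpha> + \<beta> * of_int (Legendre a (int p)) \<and> cnj (w a) = - \<alpha> + \<beta> * of_int (Legendre a (int p))"
    if "\<not> int p dvd a" for a
  proof (cases "Legendre a (int p) = 1")
    case True
    have e: "w a = x1" using wv[OF that] True by simp
    have "w a = \<alpha> + \<beta> * of_int (Legendre a (int p))" unfolding e True using ab1(1) by simp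
    moreover have "cnj (w a) = - \<alpha> + \<beta> * of_int (Legendre a (int p))"
      unfolding e True of_int_1 mult_1_right ab1(3) by (rule cx)
    ultimately show ?thesis ..
  next
    case False
    hence L: "Legendre a (int p) = -1" using wv[OF that] leg_vals[of a "int p"] by auto
    have e: "w a = - 1 / x1" using wv[OF that] L by simp
    have ce: "cnj (w a) = - x1" unfolding e using cx x0 by (simp add: divide_simps mult.commute)
    have "w a = \<alpha> + \<beta> * of_int (Legendre a (int p))" unfolding e L using ab1(2) by simp
    moreover have "cnj (w a) = - \<alpha> + \<beta> * of_int (Legendre a (int p))"
      unfolding ce L using ab1(4) by simp
    ultimately show ?thesis ..
  qed
  have Ssum: "(\<Sum>k<p. cnj (v k) * v (nat ((int k + 2 * j) mod int p))) =
              (\<Sum>k\<in>{0..<int p}. cnj (w k) * w (k + 2 * j))"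
  proof -
    have "(\<Sum>k\<in>{0..<int p}. cnj (w k) * w (k + 2 * j)) = (\<Sum>k\<in>int ` {0..<p}. cnj (w k) * w (k + 2 * j))"
      by (simp only: image_int_atLeastLessThan of_nat_0)
    also have "\<dots> = (\<Sum>k\<in>{0..<p}. cnj (w (int k)) * w (int k + 2 * j))"
      by (rule sum.reindex_cong[of int]) auto
    also have "\<dots> = (\<Sum>k<p. cnj (v k) * v (nat ((int k + 2 * j) mod int p)))"
    proof (rule sum.cong)
      show "{0..<p} = {..<p}" by auto
    next
      fix k assume "k \<in> {..<p}"
      hence "nat (int k mod P) = k" unfolding P_def by simp
      thus "cnj (w (int k)) * w (int k + 2 * j) = cnj (v k) * v (nat ((int k + 2 * j) mod int p))"
        unfolding w_def P_def by simp
    qed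
    finally show ?thesis by simp
  qed
  have main: "(\<Sum>k<p. cnj (v k) * v (nat ((int k + 2 * j) mod int p))) =
     - (of_int (int p) - 2) * \<alpha>^2 - \<beta>^2 + 2 * \<alpha> * \<beta> * of_int (Legendre (2 * j) (int p))
     - 2 * s * (\<alpha> + \<beta> * of_int (Legendre (2 * j) (int p)))" if jn: "Legendre j (int p) \<noteq> 0"
  proof -
    have t: "\<not> int p dvd 2 * j"
    proof
      assume "int p dvd 2 * j"
      hence "int p dvd 2 \<or> int p dvd j" using p(1) prime_dvd_mult_iff[of "int p" 2 j] by simp
      moreover have "\<not> int p dvd 2" using p2 zdvd_imp_le[of "int p" 2] by auto
      ultimately show False using jn leg_zero by blast
    qed
    have wn1: "\<And>a. \<not> int p dvd a \<Longrightarrow> w a = \<alpha> + \<beta> * of_int (Legendre a (int p))" using wn by blast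
    have wn2: "\<And>a. \<not> int p dvd a \<Longrightarrow> cnj (w a) = - \<alpha> + \<beta> * of_int (Legendre a (int p))" using wn by blast
    show ?thesis unfolding Ssum by (rule core[OF p t w0 cs wn1 wn2])
  qed
  have c2: "Legendre (2 * j) (int p) = Legendre 2 (int p) * Legendre j (int p)"
    by (rule leg_mult[OF p(1) p2])
  have s_eq: "csqrt (complex_of_real (-2 - sqrt (real p + 1))) = s" using v0 s_def by simp
  have p8: "p mod 8 = 3 \<or> p mod 8 = 7" using p(2) by presburger
  note A = alg[OF x0, of "of_nat p" s, folded \<alpha>_def \<beta>_def]
  show ?thesis
    unfolding Let_def s_eq
  proof (intro conjI impI; elim conjE)
    assume "Legendre j (int p) = 1" "p mod 8 = 3"
    thus "(\<Sum>k<p. cnj (v k) * v (nat ((int k + 2 * j) mod int p))) = rhs3 p s x1"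
      using main c2 leg_two[OF p] A(1) unfolding rhs3_def by simp
  next
    assume "Legendre j (int p) = 1" "p mod 8 = 7"
    thus "(\<Sum>k<p. cnj (v k) * v (nat ((int k + 2 * j) mod int p))) = rhs7 p s x1"
      using main c2 leg_two[OF p] A(2) unfolding rhs7_def by simp
  next
    assume "Legendre j (int p) = -1" "p mod 8 = 3"
    thus "(\<Sum>k<p. cnj (v k) * v (nat ((int k + 2 * j) mod int p))) = rhs3 p s (-1/x1)"
      using main c2 leg_two[OF p] A(3) unfolding rhs3_def by simp
  next
    assume "Legendre j (int p) = -1" "p mod 8 = 7"
    thus "(\<Sum>k<p. cnj (v k) * v (nat ((int k + 2 * j) mod int p))) = rhs7 p s (-1/x1)"
      using main c2 leg_two[OF p] A(4) unfolding rhs7_def by simp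
  qed
qed

end
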